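(* Let $C$ be a smooth projective curve of genus $g\ge1$ over $\mathbb{C}$, $P,Q,R\in C$ distinct, and $f$ a rational function with $\operatorname{div}(f)=NQ-NR$, $N\ge1$, $f(P)=1$. Let $C_{QR}=C\setminus\{Q,R\}$, and let $G\subset\pi_1(C_{QR},P)$ be the subgroup generated by the loops $\alpha_i={\alpha'_i}^N\beta_Q^{-m_i}$, $1\le i\le 2g$, described in the context. Then the abelianization of $G$ is isomorphic to the subgroup of index $N^{2g}$ of the abelianization of $\pi_1(C,P)$ given by multiplication by $N$: $$G/[G,G]\cong N\cdot\big(\pi_1(C,P)/[\pi_1(C,P),\pi_1(C,P)]\big).$$
   Context: The group $\pi_1(C_{QR},P)$ is free on $2g+1$ generators $\alpha'_1,\dots,\alpha'_{2g},\beta_Q$, where the $\alpha'_i$ are loops based at $P$ coming from the edges of the fundamental $4g$-gon of $C$ (so that their images under the inclusion $i:C_{QR}\hookrightarrow C$ are the standard generators of $\pi_1(C,P)$, subject to the single product-of-commutators relation), and $\beta_Q$ is a small simple loop around $Q$ based at $P$. The map $f:C_{QR}\to\mathbb{P}^1\setminus\{0,\infty\}$ induces $f_*:\pi_1(C_{QR},P)\to\pi_1(\mathbb{P}^1\setminus\{0,\infty\},1)\cong\mathbb{Z}=\langle\beta_0\rangle$, with $f_*(\beta_Q)=\beta_0^N$; define integers $m_i$ by $f_*(\alpha'_i)=\beta_0^{m_i}$, so that $\alpha_i={\alpha'_i}^N\beta_Q^{-m_i}$ lies in $\ker f_*$. *)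

theory Defs
  imports "HOL-Algebra.Algebra"
begin

text \<open>A letter is a pair (generator, sign); (x, True) is x and (x, False) is its inverse.\<close>

definition inv_letter :: "'a \<times> bool \<Rightarrow> 'a \<times> bool" where
  "inv_letter l = (fst l, \<not> snd l)"

fun cancel_letter :: "'a \<times> bool \<Rightarrow> ('a \<times> bool) list \<Rightarrow> ('a \<times> bool) list" where
  "cancel_letter l [] = [l]"
| "cancel_letter l (m # ms) = (if m = inv_letter l then ms else l # m # ms)"

definition reduce_word :: "('a \<times> bool) list \<Rightarrow> ('a \<times> bool) list" where
  "reduce_word w = foldr cancel_letter w []"

fun reduced_word :: "('a \<times> bool) list \<Rightarrow> bool" where
  "reduced_word [] = True"
| "reduced_word [l] = True"
| "reduced_word (l # m # ms) = (m \<noteq> inv_letter l \<and> reduced_word (m # ms))"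

definition free_group :: "'a set \<Rightarrow> ('a \<times> bool) list monoid" where
  "free_group S = \<lparr>carrier = {w. fst ` set w \<subseteq> S \<and> reduced_word w},
                   monoid.mult = (\<lambda>u v. reduce_word (u @ v)),
                   one = []\<rparr>"

definition free_gen :: "'a \<Rightarrow> ('a \<times> bool) list" where
  "free_gen x = [(x, True)]"

definition normal_closure :: "('a, 'b) monoid_scheme \<Rightarrow> 'a set \<Rightarrow> 'a set" where
  "normal_closure G S =
     generate G {g \<otimes>\<^bsub>G\<^esub> s \<otimes>\<^bsub>G\<^esub> inv\<^bsub>G\<^esub> g | g s. g \<in> carrier G \<and> s \<in> S}"

definition abelianization :: "('a, 'b) monoid_scheme \<Rightarrow> 'a set monoid" where
  "abelianization G = G Mod (derived G (carrier G))"

text \<open>Product of commutators [a_1,a_2]...[a_{2g-1},a_{2g}] in the free group on {0..<2g}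
  (generators a_{2k+1} = index 2k, a_{2k+2} = index 2k+1).\<close>
definition surface_relator :: "nat \<Rightarrow> (nat \<times> bool) list" where
  "surface_relator g =
     foldr (\<lambda>k w. let F = free_group {0..<2*g}; a = free_gen (2*k); b = free_gen (2*k+1) in
              a \<otimes>\<^bsub>F\<^esub> b \<otimes>\<^bsub>F\<^esub> inv\<^bsub>F\<^esub> a \<otimes>\<^bsub>F\<^esub> inv\<^bsub>F\<^esub> b \<otimes>\<^bsub>F\<^esub> w)
       [0..<g] []"

text \<open>Fundamental group of a closed orientable surface of genus g (the model of pi_1(C,P)).\<close>
definition surface_group :: "nat \<Rightarrow> (nat \<times> bool) list set monoid" where
  "surface_group g = free_group {0..<2*g} Mod
     normal_closure (free_group {0..<2*g}) {surface_relator g}"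

text \<open>Model of pi_1(C_QR,P): free on alpha'_i (index i < 2g) and beta_Q (index 2g).\<close>
definition punctured_group :: "nat \<Rightarrow> (nat \<times> bool) list monoid" where
  "punctured_group g = free_group {0..2*g}"

end

theory Submission
  imports Defs
begin


lemma inv_letter_inv[simp]: "inv_letter (inv_letter l) = l"
  by (simp add: inv_letter_def)

lemma inv_letter_neq[simp]: "inv_letter l \<noteq> l" "l \<noteq> inv_letter l"
  by (auto simp add: inv_letter_def prod_eq_iff)

lemma reduced_tl: "reduced_word (l # w) \<Longrightarrow> reduced_word w"
  by (cases w) auto

lemma reduced_cancel: "reduced_word w \<Longrightarrow> reduced_word (cancel_letter l w)"
proof (cases w)
  case Nil then show ?thesis by simp
next
  case (Cons m ms)
  assume r: "reduced_word w"
  show ?thesis using r Cons by (auto dest: reduced_tl)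
qed

lemma reduced_foldr: "reduced_word r \<Longrightarrow> reduced_word (foldr cancel_letter x r)"
  by (induction x) (auto intro: reduced_cancel)

lemma reduced_reduce: "reduced_word (reduce_word w)"
  unfolding reduce_word_def by (rule reduced_foldr) simp

lemma cancel_inv: "reduced_word w \<Longrightarrow> cancel_letter l (cancel_letter (inv_letter l) w) = w"
proof (cases w)
  case Nil then show ?thesis by simp
next
  case (Cons m ms)
  assume r: "reduced_word w"
  show ?thesis
  proof (cases "m = l")
    case True then show ?thesis using Cons r by (cases ms) auto
  next
    case False
    then show ?thesis using Cons r by (cases ms) auto
  qed
qed

lemma reduce_reduced: "reduced_word w \<Longrightarrow> reduce_word w = w"
proof (induction w)
  case Nil then show ?case by (simp add: reduce_word_def)
next
  case (Cons l w)
  have "reduce_word w = w" using Cons reduced_tl by blast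
  then show ?case using Cons.prems
    by (cases w) (auto simp: reduce_word_def)
qed

lemma reduce_append: "reduce_word (x @ y) = foldr cancel_letter x (reduce_word y)"
  by (simp add: reduce_word_def)

lemma foldr_reduce: "reduced_word r \<Longrightarrow> foldr cancel_letter (reduce_word x) r = foldr cancel_letter x r"
proof (induction x)
  case Nil then show ?case by (simp add: reduce_word_def)
next
  case (Cons l x)
  have rx: "reduce_word (l # x) = cancel_letter l (reduce_word x)"
    by (simp add: reduce_word_def)
  show ?case
  proof (cases "reduce_word x = []")
    case True
    then show ?thesis using Cons by (simp add: rx)
  next
    case False
    then obtain m ms where Cons2: "reduce_word x = m # ms" by (cases "reduce_word x") auto
    show ?thesis
    proof (cases "m = inv_letter l")
      case True
      have "foldr cancel_letter x r = foldr cancel_letter (m # ms) r" using Cons Cons2 by simp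
      also have "\<dots> = cancel_letter (inv_letter l) (foldr cancel_letter ms r)" using True by simp
      finally have "cancel_letter l (foldr cancel_letter x r) = foldr cancel_letter ms r"
        using cancel_inv reduced_foldr Cons.prems by metis
      then show ?thesis using Cons2 True by (simp add: rx)
    next
      case False
      then show ?thesis using Cons Cons2 by (simp add: rx)
    qed
  qed
qed

lemma reduce_reduce[simp]: "reduce_word (reduce_word w) = reduce_word w"
  using reduce_reduced reduced_reduce by blast

definition inv_word :: "('a \<times> bool) list \<Rightarrow> ('a \<times> bool) list" where
  "inv_word w = rev (map inv_letter w)"

lemma foldr_inv: "reduced_word r \<Longrightarrow> foldr cancel_letter (x @ inv_word x) r = r"
proof (induction x arbitrary: r)
  case Nil then show ?case by (simp add: inv_word_def)
next
  case (Cons l x)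
  have "foldr cancel_letter ((l # x) @ inv_word (l # x)) r
      = cancel_letter l (foldr cancel_letter (x @ inv_word x) (cancel_letter (inv_letter l) r))"
    by (simp add: inv_word_def)
  also have "\<dots> = cancel_letter l (cancel_letter (inv_letter l) r)"
    using Cons reduced_cancel by metis
  also have "\<dots> = r" using Cons.prems cancel_inv by blast
  finally show ?case .
qed

lemma set_cancel: "set (cancel_letter l w) \<subseteq> insert l (set w)"
  by (cases w) auto

lemma set_foldr: "set (foldr cancel_letter x r) \<subseteq> set x \<union> set r"
  by (induction x) (use set_cancel in fastforce)+

lemma set_reduce: "set (reduce_word w) \<subseteq> set w"
  unfolding reduce_word_def using set_foldr by fastforce

lemma inv_word_inv[simp]: "inv_word (inv_word x) = x"
  by (simp add: inv_word_def rev_map comp_def)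

lemma fg_carrier: "w \<in> carrier (free_group S) \<longleftrightarrow> fst ` set w \<subseteq> S \<and> reduced_word w"
  by (simp add: free_group_def)

lemma fg_mult: "u \<otimes>\<^bsub>free_group S\<^esub> v = reduce_word (u @ v)"
  by (simp add: free_group_def)

lemma fg_one: "\<one>\<^bsub>free_group S\<^esub> = []"
  by (simp add: free_group_def)

lemma reduce_assoc: "reduce_word (reduce_word (x @ y) @ z) = reduce_word (x @ reduce_word (y @ z))"
proof -
  have "reduce_word (reduce_word (x @ y) @ z) = foldr cancel_letter (reduce_word (x @ y)) (reduce_word z)"
    by (rule reduce_append)
  also have "\<dots> = foldr cancel_letter (x @ y) (reduce_word z)"
    by (rule foldr_reduce[OF reduced_reduce])
  also have "\<dots> = foldr cancel_letter x (reduce_word (y @ z))"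
    by (simp only: reduce_append foldr_append comp_def)
  also have "\<dots> = reduce_word (x @ reduce_word (y @ z))"
    by (simp only: reduce_append[of x] reduce_reduce)
  finally show ?thesis .
qed

lemma fst_set_reduce: "fst ` set w \<subseteq> S \<Longrightarrow> fst ` set (reduce_word w) \<subseteq> S"
  using set_reduce by fastforce

lemma fst_set_inv_word: "fst ` set (inv_word w) = fst ` set w"
  by (force simp: inv_word_def inv_letter_def image_iff)

theorem group_free_group: "group (free_group S)"
proof (rule groupI)
  fix x y assume "x \<in> carrier (free_group S)" "y \<in> carrier (free_group S)"
  then show "x \<otimes>\<^bsub>free_group S\<^esub> y \<in> carrier (free_group S)"
    by (auto simp: fg_carrier fg_mult reduced_reduce intro!: fst_set_reduce) force+
next
  show "\<one>\<^bsub>free_group S\<^esub> \<in> carrier (free_group S)" by (simp add: fg_carrier fg_one)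
next
  fix x y z
  show "x \<otimes>\<^bsub>free_group S\<^esub> y \<otimes>\<^bsub>free_group S\<^esub> z = x \<otimes>\<^bsub>free_group S\<^esub> (y \<otimes>\<^bsub>free_group S\<^esub> z)"
    by (simp add: fg_mult reduce_assoc)
next
  fix x assume "x \<in> carrier (free_group S)"
  then show "\<one>\<^bsub>free_group S\<^esub> \<otimes>\<^bsub>free_group S\<^esub> x = x"
    by (simp add: fg_carrier fg_mult fg_one reduce_reduced)
next
  fix x assume x: "x \<in> carrier (free_group S)"
  let ?y = "reduce_word (inv_word x)"
  have "?y \<in> carrier (free_group S)"
    using x fst_set_inv_word[of x] by (auto simp: fg_carrier reduced_reduce intro!: fst_set_reduce)
  moreover have "?y \<otimes>\<^bsub>free_group S\<^esub> x = []"
  proof -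
    have "?y \<otimes>\<^bsub>free_group S\<^esub> x = foldr cancel_letter ?y (reduce_word x)"
      by (simp add: fg_mult reduce_append)
    also have "\<dots> = foldr cancel_letter (inv_word x) (reduce_word x)"
      by (rule foldr_reduce[OF reduced_reduce])
    also have "\<dots> = foldr cancel_letter (inv_word x @ inv_word (inv_word x)) []"
      by (simp add: reduce_word_def)
    also have "\<dots> = []" by (rule foldr_inv) simp
    finally show ?thesis .
  qed
  ultimately show "\<exists>y\<in>carrier (free_group S). y \<otimes>\<^bsub>free_group S\<^esub> x = \<one>\<^bsub>free_group S\<^esub>"
    by (auto simp: fg_one)
qed

lemma fg_inv_gen: "i \<in> S \<Longrightarrow> inv\<^bsub>free_group S\<^esub> [(i, True)] = [(i, False)]"
  by (rule group.inv_equality[OF group_free_group])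
     (auto simp: fg_carrier fg_mult fg_one reduce_word_def inv_letter_def)

lemma fg_cons: "l # w \<in> carrier (free_group S) \<Longrightarrow> l # w = [l] \<otimes>\<^bsub>free_group S\<^esub> w"
  by (cases w) (auto simp: fg_carrier fg_mult reduce_append reduce_reduced dest: reduced_tl)

lemma fg_generated: "carrier (free_group S) \<subseteq> generate (free_group S) (free_gen ` S)"
proof
  fix w assume "w \<in> carrier (free_group S)"
  then show "w \<in> generate (free_group S) (free_gen ` S)"
  proof (induction w)
    case Nil then show ?case using generate.one[of "free_group S"] by (simp add: fg_one)
  next
    case (Cons l w)
    obtain i b where l: "l = (i, b)" by (cases l)
    have iS: "i \<in> S" using Cons.prems l by (simp add: fg_carrier)
    have w: "w \<in> carrier (free_group S)" using Cons.prems by (auto simp: fg_carrier dest: reduced_tl)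
    have gi: "free_gen i \<in> generate (free_group S) (free_gen ` S)" using iS by (auto intro: generate.incl)
    have "[l] \<in> generate (free_group S) (free_gen ` S)"
    proof (cases b)
      case True then show ?thesis using gi l by (simp add: free_gen_def)
    next
      case False
      have "inv\<^bsub>free_group S\<^esub> (free_gen i) \<in> generate (free_group S) (free_gen ` S)"
        using iS by (auto intro: generate.inv)
      then show ?thesis using False l iS by (simp add: free_gen_def fg_inv_gen)
    qed
    then show ?case using fg_cons[OF Cons.prems] Cons.IH[OF w] generate.eng by metis
  qed
qed

definition esum :: "(nat \<times> bool) list \<Rightarrow> nat \<Rightarrow> int" where
  "esum w i = sum_list (map (\<lambda>l. if fst l = i then (if snd l then 1 else -1) else 0) w)"

lemma esum_append: "esum (u @ v) i = esum u i + esum v i"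
  by (simp add: esum_def)

lemma esum_cons: "esum (l # v) i = esum [l] i + esum v i"
  by (simp add: esum_def)

lemma esum_cancel: "esum (cancel_letter l w) i = esum [l] i + esum w i"
  by (cases w) (auto simp: esum_def inv_letter_def)

lemma esum_reduce: "esum (reduce_word w) i = esum w i"
  unfolding reduce_word_def
proof (induction w)
  case Nil then show ?case by simp
next
  case (Cons a w) then show ?case using esum_cons[of a w i] by (simp add: esum_cancel)
qed

definition Zg :: "nat \<Rightarrow> (nat \<Rightarrow> int) monoid" where
  "Zg n = \<lparr>carrier = {v. \<forall>i\<ge>n. v i = 0}, monoid.mult = (\<lambda>u v i. u i + v i), one = (\<lambda>i. 0)\<rparr>"

lemma Zg_carrier: "v \<in> carrier (Zg n) \<longleftrightarrow> (\<forall>i\<ge>n. v i = 0)"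
  by (simp add: Zg_def)

lemma Zg_mult: "u \<otimes>\<^bsub>Zg n\<^esub> v = (\<lambda>i. u i + v i)"
  by (simp add: Zg_def)

lemma Zg_one: "\<one>\<^bsub>Zg n\<^esub> = (\<lambda>i. 0)"
  by (simp add: Zg_def)

lemma comm_group_Zg: "comm_group (Zg n)"
proof (rule comm_groupI)
  fix x assume "x \<in> carrier (Zg n)"
  then show "\<exists>y\<in>carrier (Zg n). y \<otimes>\<^bsub>Zg n\<^esub> x = \<one>\<^bsub>Zg n\<^esub>"
    by (intro bexI[of _ "\<lambda>i. - x i"]) (auto simp: Zg_def)
qed (auto simp: Zg_def)

lemma group_Zg: "group (Zg n)"
  using comm_group_Zg comm_group_def by blast

lemma Zg_inv: "v \<in> carrier (Zg n) \<Longrightarrow> inv\<^bsub>Zg n\<^esub> v = (\<lambda>i. - v i)"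
  by (rule group.inv_equality[OF group_Zg]) (auto simp: Zg_def)

lemma Zg_nat_pow: "v [^]\<^bsub>Zg n\<^esub> (k::nat) = (\<lambda>i. int k * v i)"
  by (induction k) (auto simp: Zg_def algebra_simps)

lemma Zg_int_pow: "v \<in> carrier (Zg n) \<Longrightarrow> v [^]\<^bsub>Zg n\<^esub> (k::int) = (\<lambda>i. k * v i)"
  by (auto simp: int_pow_def2 Zg_nat_pow Zg_inv Zg_carrier)

definition Ecut :: "nat \<Rightarrow> (nat \<times> bool) list \<Rightarrow> nat \<Rightarrow> int" where
  "Ecut m w = (\<lambda>i. if i < m then esum w i else 0)"

lemma Ecut_hom: "Ecut m \<in> hom (free_group S) (Zg m)"
  by (rule homI) (auto simp: Ecut_def Zg_carrier Zg_mult fg_mult esum_reduce esum_append)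

lemma Ecut_gen: "Ecut M (free_gen k) = (\<lambda>j. if j < M \<and> j = k then 1 else 0)"
  by (auto simp: Ecut_def esum_def free_gen_def fun_eq_iff)

lemma free_gen_carrier: "k \<in> S \<Longrightarrow> free_gen k \<in> carrier (free_group S)"
  by (simp add: fg_carrier free_gen_def)



lemma hom_finprod:
  assumes G: "comm_group G" and K: "comm_group K" and h: "h \<in> hom G K"
    and fin: "finite A" and f: "f \<in> A \<rightarrow> carrier G"
  shows "h (finprod G f A) = finprod K (\<lambda>i. h (f i)) A"
  using fin f
proof (induction A rule: finite_induct)
  case empty
  interpret G: comm_group G by (rule G)
  interpret K: comm_group K by (rule K)
  interpret group_hom G K h using G K h by (simp add: comm_group_def group_hom_def group_hom_axioms_def)
  show ?case by simp
next
  case (insert a A)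
  interpret G: comm_group G by (rule G)
  interpret K: comm_group K by (rule K)
  interpret group_hom G K h using G K h by (simp add: comm_group_def group_hom_def group_hom_axioms_def)
  have fA: "f \<in> A \<rightarrow> carrier G" "f a \<in> carrier G" using insert by auto
  have "h (finprod G f (insert a A)) = h (f a \<otimes>\<^bsub>G\<^esub> finprod G f A)"
    using insert fA by simp
  also have "\<dots> = h (f a) \<otimes>\<^bsub>K\<^esub> h (finprod G f A)"
    using fA by (simp add: G.finprod_closed)
  also have "\<dots> = finprod K (\<lambda>i. h (f i)) (insert a A)"
    using insert fA by (simp add: Pi_def)
  finally show ?case .
qed

lemma Zg_finprod:
  assumes fin: "finite A" and f: "f \<in> A \<rightarrow> carrier (Zg n)"
  shows "finprod (Zg n) f A = (\<lambda>j. \<Sum>i\<in>A. f i j)"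
  using fin f
proof (induction A rule: finite_induct)
  case empty
  interpret comm_group "Zg n" by (rule comm_group_Zg)
  show ?case by (simp add: Zg_one)
next
  case (insert a A)
  interpret comm_group "Zg n" by (rule comm_group_Zg)
  show ?case using insert by (simp add: Zg_mult Pi_def)
qed

lemma abel_iso:
  assumes H: "group H" and x: "\<forall>i<n. x i \<in> carrier H"
    and gen: "carrier H \<subseteq> generate H (x ` {..<n})"
    and phi: "\<phi> \<in> hom H (Zg n)"
    and phix: "\<forall>i<n. \<phi> (x i) = (\<lambda>j. if j = i then c else 0)" and c: "c \<noteq> 0"
  shows "Zg n \<cong> abelianization H"
proof -
  interpret H: group H by (rule H)
  define D where "D = derived H (carrier H)"
  define Q where "Q = H Mod D"
  have DN: "D \<lhd> H" unfolding D_def by (rule H.derived_self_is_normal)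
  interpret DN: normal D H by (rule DN)
  have Qc: "comm_group Q" unfolding Q_def D_def by (rule H.derived_quot_is_comm_group)
  interpret Q: comm_group Q by (rule Qc)
  interpret Z: comm_group "Zg n" by (rule comm_group_Zg)
  define \<pi> where "\<pi> = (\<lambda>a. D #>\<^bsub>H\<^esub> a)"
  have pi: "\<pi> \<in> hom H Q" unfolding \<pi>_def Q_def by (rule DN.r_coset_hom_Mod)
  interpret PI: group_hom H Q \<pi> using pi by (simp add: group_hom_def group_hom_axioms_def H Q.is_group)
  have pix: "\<pi> (x i) \<in> carrier Q" if "i < n" for i using x that by simp
  define \<theta> where "\<theta> = (\<lambda>v::nat \<Rightarrow> int. finprod Q (\<lambda>i. \<pi> (x i) [^]\<^bsub>Q\<^esub> v i) {..<n})"
  have theta: "\<theta> \<in> hom (Zg n) Q"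
  proof (rule homI)
    fix v assume "v \<in> carrier (Zg n)"
    show "\<theta> v \<in> carrier Q" unfolding \<theta>_def by (rule Q.finprod_closed) (use pix in auto)
  next
    fix u v assume "u \<in> carrier (Zg n)" "v \<in> carrier (Zg n)"
    have "\<theta> (u \<otimes>\<^bsub>Zg n\<^esub> v) = finprod Q (\<lambda>i. \<pi> (x i) [^]\<^bsub>Q\<^esub> u i \<otimes>\<^bsub>Q\<^esub> \<pi> (x i) [^]\<^bsub>Q\<^esub> v i) {..<n}"
      unfolding \<theta>_def Zg_mult by (rule Q.finprod_cong') (auto simp: pix Q.int_pow_mult)
    also have "\<dots> = \<theta> u \<otimes>\<^bsub>Q\<^esub> \<theta> v"
      unfolding \<theta>_def by (rule Q.finprod_multf) (auto simp: pix)
    finally show "\<theta> (u \<otimes>\<^bsub>Zg n\<^esub> v) = \<theta> u \<otimes>\<^bsub>Q\<^esub> \<theta> v" .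
  qed
  interpret TH: group_hom "Zg n" Q \<theta> using theta by (simp add: group_hom_def group_hom_axioms_def Z.is_group Q.is_group)
  interpret PHI: group_hom H "Zg n" \<phi> using phi by (simp add: group_hom_def group_hom_axioms_def H Z.is_group)
  have Dker: "D \<subseteq> kernel H (Zg n) \<phi>"
  proof -
    have "\<phi> ` D = derived (Zg n) (\<phi> ` carrier H)"
      unfolding D_def by (rule PHI.derived_img[symmetric]) simp
    also have "\<dots> = {\<one>\<^bsub>Zg n\<^esub>}" by (rule Z.derived_eq_singleton) auto
    finally show ?thesis using DN.subset by (auto simp: kernel_def)
  qed
  obtain \<psi> where psi: "\<psi> \<in> hom Q (Zg n)" and psipi: "\<And>h. h \<in> carrier H \<Longrightarrow> \<psi> (\<pi> h) = \<phi> h"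
    using PHI.FactGroup_universal_kernel[OF DN Dker] unfolding Q_def \<pi>_def by metis
  interpret PSI: group_hom Q "Zg n" \<psi> using psi by (simp add: group_hom_def group_hom_axioms_def Z.is_group Q.is_group)
  have psitheta: "\<psi> (\<theta> v) = (\<lambda>j. c * v j)" if v: "v \<in> carrier (Zg n)" for v
  proof -
    have "\<psi> (\<theta> v) = finprod (Zg n) (\<lambda>i. \<psi> (\<pi> (x i) [^]\<^bsub>Q\<^esub> v i)) {..<n}"
      unfolding \<theta>_def by (rule hom_finprod[OF Qc comm_group_Zg psi]) (auto simp: pix)
    also have "\<dots> = finprod (Zg n) (\<lambda>i. (\<lambda>j. v i * (if j = i then c else 0))) {..<n}"
    proof (rule Z.finprod_cong')
      fix i assume i: "i \<in> {..<n}"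
      have "\<psi> (\<pi> (x i) [^]\<^bsub>Q\<^esub> v i) = \<psi> (\<pi> (x i)) [^]\<^bsub>Zg n\<^esub> v i"
        using i pix by (simp add: PSI.hom_int_pow)
      also have "\<dots> = (\<lambda>j. v i * (if j = i then c else 0))"
      proof -
        have ec: "(\<lambda>j. if j = i then c else (0::int)) \<in> carrier (Zg n)" using i by (auto simp: Zg_carrier)
        have "\<psi> (\<pi> (x i)) = (\<lambda>j. if j = i then c else 0)" using i x phix psipi by simp
        then show ?thesis using Zg_int_pow[OF ec, of "v i"] by simp
      qed
      finally show "\<psi> (\<pi> (x i) [^]\<^bsub>Q\<^esub> v i) = (\<lambda>j. v i * (if j = i then c else 0))" .
    qed (auto simp: Zg_carrier)
    also have "\<dots> = (\<lambda>j. \<Sum>i<n. v i * (if j = i then c else 0))"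
      by (rule Zg_finprod) (auto simp: Zg_carrier)
    also have "\<dots> = (\<lambda>j. c * v j)"
    proof
      fix j
      have "(\<Sum>i<n. v i * (if j = i then c else 0)) = (\<Sum>i<n. if j = i then v j * c else 0)"
        by (rule sum.cong) auto
      also have "\<dots> = c * v j" using v by (auto simp: Zg_carrier)
      finally show "(\<Sum>i<n. v i * (if j = i then c else 0)) = c * v j" .
    qed
    finally show ?thesis .
  qed
  have inj: "inj_on \<theta> (carrier (Zg n))"
  proof (rule inj_onI)
    fix u v assume u: "u \<in> carrier (Zg n)" and v: "v \<in> carrier (Zg n)" and e: "\<theta> u = \<theta> v"
    have "(\<lambda>j. c * u j) = (\<lambda>j. c * v j)" using psitheta[OF u] psitheta[OF v] e by simp
    then show "u = v" using c by (auto simp: fun_eq_iff)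
  qed
  define T where "T = {h \<in> carrier H. \<pi> h \<in> \<theta> ` carrier (Zg n)}"
  have Tsub: "subgroup T H"
  proof (rule H.subgroupI)
    show "T \<subseteq> carrier H" unfolding T_def by auto
    have "\<pi> \<one>\<^bsub>H\<^esub> = \<theta> \<one>\<^bsub>Zg n\<^esub>" by (metis PI.hom_one TH.hom_one)
    then have "\<one>\<^bsub>H\<^esub> \<in> T" unfolding T_def using H.one_closed Z.one_closed by blast
    then show "T \<noteq> {}" by blast
  next
    fix h assume "h \<in> T"
    then obtain v where h: "h \<in> carrier H" "v \<in> carrier (Zg n)" "\<pi> h = \<theta> v" unfolding T_def by auto
    then have "\<pi> (inv\<^bsub>H\<^esub> h) = \<theta> (inv\<^bsub>Zg n\<^esub> v)" by (metis PI.hom_inv TH.hom_inv)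
    then show "inv\<^bsub>H\<^esub> h \<in> T" unfolding T_def using h H.inv_closed Z.inv_closed by blast
  next
    fix h k assume "h \<in> T" "k \<in> T"
    then obtain v w where h: "h \<in> carrier H" "v \<in> carrier (Zg n)" "\<pi> h = \<theta> v"
      and k: "k \<in> carrier H" "w \<in> carrier (Zg n)" "\<pi> k = \<theta> w" unfolding T_def by auto
    then have "\<pi> (h \<otimes>\<^bsub>H\<^esub> k) = \<theta> (v \<otimes>\<^bsub>Zg n\<^esub> w)" by (metis PI.hom_mult TH.hom_mult)
    then show "h \<otimes>\<^bsub>H\<^esub> k \<in> T" unfolding T_def using h k H.m_closed Z.m_closed by blast
  qed
  have xT: "x ` {..<n} \<subseteq> T"
  proof
    fix y assume "y \<in> x ` {..<n}"
    then obtain i where i: "i < n" "y = x i" by auto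
    define e where "e = (\<lambda>j. if j = i then 1 else (0::int))"
    have e: "e \<in> carrier (Zg n)" using i by (auto simp: e_def Zg_carrier)
    have "\<theta> e = finprod Q (\<lambda>j. if i = j then \<pi> (x j) else \<one>\<^bsub>Q\<^esub>) {..<n}"
      unfolding \<theta>_def by (rule Q.finprod_cong') (auto simp: e_def pix)
    also have "\<dots> = \<pi> (x i)" by (rule Q.finprod_singleton) (use i pix in auto)
    finally have "\<pi> (x i) = \<theta> e" by simp
    then show "y \<in> T" unfolding T_def using i x e by blast
  qed
  have "carrier H \<subseteq> T" using gen H.generate_subgroup_incl[OF xT Tsub] by blast
  then have "\<pi> ` carrier H \<subseteq> \<theta> ` carrier (Zg n)" unfolding T_def by blast
  moreover have "carrier Q = \<pi> ` carrier H" unfolding Q_def \<pi>_def by (simp add: carrier_FactGroup)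
  moreover have "\<theta> ` carrier (Zg n) \<subseteq> carrier Q" by (rule image_subsetI, rule TH.hom_closed)
  ultimately have surj: "\<theta> ` carrier (Zg n) = carrier Q" by (rule_tac equalityI) simp_all
  have "\<theta> \<in> iso (Zg n) Q" using theta surj inj by (simp add: iso_iff)
  then show ?thesis unfolding Q_def D_def abelianization_def by (rule is_isoI)
qed



definition Zbox :: "nat \<Rightarrow> nat \<Rightarrow> (nat \<Rightarrow> int) set" where
  "Zbox n N = {b. \<forall>i. (i < n \<longrightarrow> 0 \<le> b i \<and> b i < int N) \<and> (n \<le> i \<longrightarrow> b i = 0)}"

lemma card_Zbox: "card (Zbox n N) = N ^ n"
proof -
  have "bij_betw (\<lambda>b. restrict b {..<n}) (Zbox n N) (PiE {..<n} (\<lambda>_. {0..<int N}))"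
  proof (rule bij_betw_byWitness[where f' = "\<lambda>u i. if i < n then u i else 0"])
    show "\<forall>a\<in>Zbox n N. (\<lambda>i. if i < n then restrict a {..<n} i else 0) = a"
      by (auto simp: Zbox_def fun_eq_iff)
    show "\<forall>a'\<in>PiE {..<n} (\<lambda>_. {0..<int N}). restrict (\<lambda>i. if i < n then a' i else 0) {..<n} = a'"
      by (auto simp: fun_eq_iff PiE_def extensional_def)
    show "(\<lambda>b. restrict b {..<n}) ` Zbox n N \<subseteq> PiE {..<n} (\<lambda>_. {0..<int N})"
      by (auto simp: Zbox_def)
    show "(\<lambda>u i. if i < n then u i else 0) ` PiE {..<n} (\<lambda>_. {0..<int N}) \<subseteq> Zbox n N"
      by (auto simp: Zbox_def PiE_def Pi_def)
  qed
  then have "card (Zbox n N) = card (PiE {..<n} (\<lambda>_. {0..<int N}))" by (rule bij_betw_same_card)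
  also have "\<dots> = N ^ n" by (simp add: card_PiE)
  finally show ?thesis .
qed

definition NZ :: "nat \<Rightarrow> nat \<Rightarrow> (nat \<Rightarrow> int) set" where
  "NZ n N = {v \<in> carrier (Zg n). \<forall>i. int N dvd v i}"

lemma NZ_coset: "v \<in> carrier (Zg n) \<Longrightarrow>
   NZ n N #>\<^bsub>Zg n\<^esub> v = {w \<in> carrier (Zg n). \<forall>i. int N dvd w i - v i}"
proof (intro equalityI subsetI)
  fix w assume v: "v \<in> carrier (Zg n)" and "w \<in> NZ n N #>\<^bsub>Zg n\<^esub> v"
  then obtain h where h: "h \<in> NZ n N" "w = (\<lambda>i. h i + v i)"
    by (auto simp: r_coset_def Zg_mult)
  then show "w \<in> {w \<in> carrier (Zg n). \<forall>i. int N dvd w i - v i}"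
    using v by (auto simp: NZ_def Zg_carrier)
next
  fix w assume v: "v \<in> carrier (Zg n)" and w: "w \<in> {w \<in> carrier (Zg n). \<forall>i. int N dvd w i - v i}"
  have "(\<lambda>i. w i - v i) \<in> NZ n N" using v w by (auto simp: NZ_def Zg_carrier)
  moreover have "w = (\<lambda>i. w i - v i) \<otimes>\<^bsub>Zg n\<^esub> v" by (simp add: Zg_mult)
  ultimately show "w \<in> NZ n N #>\<^bsub>Zg n\<^esub> v" unfolding r_coset_def by blast
qed

lemma dvd_box_eq:
  fixes a b N :: int
  assumes "0 \<le> a" "a < N" "0 \<le> b" "b < N" "N dvd a - b"
  shows "a = b"
proof -
  have "a mod N = b mod N" using assms(5) by (simp add: mod_eq_dvd_iff)
  then show ?thesis using assms by simp
qed

lemma card_rcosets_NZ: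
  assumes N: "N \<ge> 1"
  shows "card (rcosets\<^bsub>Zg n\<^esub> (NZ n N)) = N ^ n"
proof -
  have Zb: "Zbox n N \<subseteq> carrier (Zg n)" by (auto simp: Zbox_def Zg_carrier)
  have "rcosets\<^bsub>Zg n\<^esub> (NZ n N) = (\<lambda>b. NZ n N #>\<^bsub>Zg n\<^esub> b) ` Zbox n N"
  proof (intro equalityI subsetI)
    fix C assume "C \<in> rcosets\<^bsub>Zg n\<^esub> (NZ n N)"
    then obtain v where v: "v \<in> carrier (Zg n)" "C = NZ n N #>\<^bsub>Zg n\<^esub> v" by (auto simp: RCOSETS_def)
    define b where "b = (\<lambda>i. v i mod int N)"
    have b: "b \<in> Zbox n N" using v N by (auto simp: Zbox_def b_def Zg_carrier)
    have "\<forall>w i. (int N dvd w i - v i) = (int N dvd w i - b i)"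
    proof (intro allI)
      fix w i
      have "(int N dvd w i - v i) = (w i mod int N = v i mod int N)" by (simp add: mod_eq_dvd_iff)
      also have "\<dots> = (w i mod int N = b i mod int N)" by (simp add: b_def)
      also have "\<dots> = (int N dvd w i - b i)" by (simp add: mod_eq_dvd_iff)
      finally show "(int N dvd w i - v i) = (int N dvd w i - b i)" .
    qed
    then have "C = NZ n N #>\<^bsub>Zg n\<^esub> b" using v b Zb by (auto simp: NZ_coset)
    then show "C \<in> (\<lambda>b. NZ n N #>\<^bsub>Zg n\<^esub> b) ` Zbox n N" using b by blast
  next
    fix C assume "C \<in> (\<lambda>b. NZ n N #>\<^bsub>Zg n\<^esub> b) ` Zbox n N"
    then show "C \<in> rcosets\<^bsub>Zg n\<^esub> (NZ n N)" using Zb by (auto simp: RCOSETS_def)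
  qed
  moreover have "inj_on (\<lambda>b. NZ n N #>\<^bsub>Zg n\<^esub> b) (Zbox n N)"
  proof (rule inj_onI)
    fix a b assume a: "a \<in> Zbox n N" and b: "b \<in> Zbox n N"
      and e: "NZ n N #>\<^bsub>Zg n\<^esub> a = NZ n N #>\<^bsub>Zg n\<^esub> b"
    have ac: "a \<in> carrier (Zg n)" and bc: "b \<in> carrier (Zg n)" using a b Zb by auto
    have "a \<in> NZ n N #>\<^bsub>Zg n\<^esub> a" using ac by (simp add: NZ_coset)
    then have "a \<in> NZ n N #>\<^bsub>Zg n\<^esub> b" using e by simp
    then have d: "\<forall>i. int N dvd a i - b i" using bc by (simp add: NZ_coset)
    show "a = b"
    proof
      fix i show "a i = b i"
      proof (cases "i < n")
        case True
        then show ?thesis using a b d dvd_box_eq[of "a i" "int N" "b i"] by (auto simp: Zbox_def)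
      next
        case False then show ?thesis using a b by (auto simp: Zbox_def)
      qed
    qed
  qed
  ultimately show ?thesis using card_Zbox card_image by metis
qed

lemma power_subgroup:
  assumes A: "comm_group A" and th: "\<theta> \<in> iso (Zg n) A" and N: "N \<ge> 1"
  shows "card (rcosets\<^bsub>A\<^esub> ((\<lambda>x. x [^]\<^bsub>A\<^esub> N) ` carrier A)) = N ^ n
         \<and> Zg n \<cong> subgroup_generated A ((\<lambda>x. x [^]\<^bsub>A\<^esub> N) ` carrier A)"
proof -
  interpret A: comm_group A by (rule A)
  interpret Z: comm_group "Zg n" by (rule comm_group_Zg)
  have thom: "\<theta> \<in> hom (Zg n) A" and tinj: "inj_on \<theta> (carrier (Zg n))"
    and tsurj: "\<theta> ` carrier (Zg n) = carrier A" using th by (auto simp: iso_iff)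
  interpret TH: group_hom "Zg n" A \<theta> using thom by (simp add: group_hom_def group_hom_axioms_def A.is_group Z.is_group)
  define NA where "NA = (\<lambda>x. x [^]\<^bsub>A\<^esub> N) ` carrier A"
  define \<mu> where "\<mu> = (\<lambda>v. \<theta> (\<lambda>i. int N * v i))"
  have mu_pow: "\<mu> v = \<theta> v [^]\<^bsub>A\<^esub> N" if "v \<in> carrier (Zg n)" for v
    using that TH.hom_nat_pow[of v N] by (simp add: \<mu>_def Zg_nat_pow)
  have Nv: "(\<lambda>i. int N * v i) \<in> carrier (Zg n)" if "v \<in> carrier (Zg n)" for v
    using that by (auto simp: Zg_carrier)
  have muhom: "\<mu> \<in> hom (Zg n) A"
  proof (rule homI)
    fix v assume "v \<in> carrier (Zg n)" then show "\<mu> v \<in> carrier A" by (simp add: mu_pow)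
  next
    fix u v assume "u \<in> carrier (Zg n)" "v \<in> carrier (Zg n)"
    then show "\<mu> (u \<otimes>\<^bsub>Zg n\<^esub> v) = \<mu> u \<otimes>\<^bsub>A\<^esub> \<mu> v"
      by (simp add: mu_pow A.nat_pow_distrib)
  qed
  have muinj: "inj_on \<mu> (carrier (Zg n))"
  proof (rule inj_onI)
    fix u v assume u: "u \<in> carrier (Zg n)" and v: "v \<in> carrier (Zg n)" and e: "\<mu> u = \<mu> v"
    have "(\<lambda>i. int N * u i) = (\<lambda>i. int N * v i)"
      using inj_onD[OF tinj] e Nv[OF u] Nv[OF v] unfolding \<mu>_def by blast
    then show "u = v" using N by (auto simp: fun_eq_iff)
  qed
  have muim: "\<mu> ` carrier (Zg n) = NA"
    unfolding NA_def using tsurj[symmetric] by (auto simp: mu_pow image_iff)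
  have "\<mu> \<in> iso (Zg n) (subgroup_generated A (\<mu> ` carrier (Zg n)))"
    using muhom muinj by (simp add: iso_onto_image Z.is_group A.is_group)
  then have iso2: "Zg n \<cong> subgroup_generated A NA" using muim is_isoI by metis
  have NAim: "NA = \<theta> ` NZ n N"
  proof -
    have "NZ n N = (\<lambda>v i. int N * v i) ` carrier (Zg n)"
    proof (intro equalityI subsetI)
      fix w assume "w \<in> NZ n N"
      then have w: "w \<in> carrier (Zg n)" "\<forall>i. int N dvd w i" by (auto simp: NZ_def)
      define v where "v = (\<lambda>i. w i div int N)"
      have "v \<in> carrier (Zg n)" using w by (auto simp: v_def Zg_carrier)
      moreover have "w = (\<lambda>i. int N * v i)" using w by (auto simp: v_def fun_eq_iff)
      ultimately show "w \<in> (\<lambda>v i. int N * v i) ` carrier (Zg n)" by blast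
    qed (auto simp: NZ_def Zg_carrier)
    then show ?thesis using muim by (simp add: \<mu>_def image_image)
  qed
  have NZsub: "NZ n N \<subseteq> carrier (Zg n)" by (auto simp: NZ_def)
  have rc: "rcosets\<^bsub>A\<^esub> NA = (\<lambda>C. \<theta> ` C) ` (rcosets\<^bsub>Zg n\<^esub> (NZ n N))"
  proof -
    have co: "NA #>\<^bsub>A\<^esub> \<theta> v = \<theta> ` (NZ n N #>\<^bsub>Zg n\<^esub> v)" if v: "v \<in> carrier (Zg n)" for v
    proof -
      have "NA #>\<^bsub>A\<^esub> \<theta> v = (\<Union>h\<in>NZ n N. {\<theta> h \<otimes>\<^bsub>A\<^esub> \<theta> v})"
        unfolding NAim r_coset_def by blast
      also have "\<dots> = (\<Union>h\<in>NZ n N. {\<theta> (h \<otimes>\<^bsub>Zg n\<^esub> v)})"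
        using v NZsub by (intro SUP_cong refl) (auto simp: TH.hom_mult)
      also have "\<dots> = \<theta> ` (NZ n N #>\<^bsub>Zg n\<^esub> v)" unfolding r_coset_def by blast
      finally show ?thesis .
    qed
    show ?thesis
    proof (intro equalityI subsetI)
      fix C assume "C \<in> rcosets\<^bsub>A\<^esub> NA"
      then obtain a where a: "a \<in> carrier A" "C = NA #>\<^bsub>A\<^esub> a" by (auto simp: RCOSETS_def)
      then obtain v where v: "v \<in> carrier (Zg n)" "a = \<theta> v" using tsurj by blast
      then show "C \<in> (\<lambda>C. \<theta> ` C) ` (rcosets\<^bsub>Zg n\<^esub> (NZ n N))"
        using a co by (auto simp: RCOSETS_def)
    next
      fix C assume "C \<in> (\<lambda>C. \<theta> ` C) ` (rcosets\<^bsub>Zg n\<^esub> (NZ n N))"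
      then obtain v where v: "v \<in> carrier (Zg n)" "C = \<theta> ` (NZ n N #>\<^bsub>Zg n\<^esub> v)"
        by (auto simp: RCOSETS_def)
      then have "C = NA #>\<^bsub>A\<^esub> \<theta> v" using co[OF v(1)] by simp
      then show "C \<in> rcosets\<^bsub>A\<^esub> NA" using TH.hom_closed[OF v(1)]
        unfolding RCOSETS_def by blast
    qed
  qed
  have "inj_on (\<lambda>C. \<theta> ` C) (rcosets\<^bsub>Zg n\<^esub> (NZ n N))"
  proof (rule inj_onI)
    fix C D assume C: "C \<in> rcosets\<^bsub>Zg n\<^esub> (NZ n N)" and D: "D \<in> rcosets\<^bsub>Zg n\<^esub> (NZ n N)"
      and e: "\<theta> ` C = \<theta> ` D"
    have "C \<subseteq> carrier (Zg n)" "D \<subseteq> carrier (Zg n)"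
      using C D Z.r_coset_subset_G NZsub by (auto simp: RCOSETS_def)
    then show "C = D" using e tinj by (simp add: inj_on_image_eq_iff)
  qed
  then have "card (rcosets\<^bsub>A\<^esub> NA) = card (rcosets\<^bsub>Zg n\<^esub> (NZ n N))"
    using rc card_image by metis
  also have "\<dots> = N ^ n" using card_rcosets_NZ[OF N] .
  finally show ?thesis using iso2 unfolding NA_def by simp
qed




lemma G_part:
  fixes g N :: nat and m :: "nat \<Rightarrow> int"
  assumes N: "N \<ge> 1"
  defines "F \<equiv> free_group {0..2*g}"
  shows "Zg (2*g) \<cong> abelianization (subgroup_generated F
           ((\<lambda>i. (free_gen i [^]\<^bsub>F\<^esub> N) \<otimes>\<^bsub>F\<^esub> (free_gen (2*g) [^]\<^bsub>F\<^esub> (- m i))) ` {0..<2*g}))"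
proof -
  interpret F: group F unfolding F_def by (rule group_free_group)
  interpret Z: comm_group "Zg (2*g)" by (rule comm_group_Zg)
  define \<alpha> where "\<alpha> = (\<lambda>i. (free_gen i [^]\<^bsub>F\<^esub> N) \<otimes>\<^bsub>F\<^esub> (free_gen (2*g) [^]\<^bsub>F\<^esub> (- m i)))"
  define H where "H = subgroup_generated F (\<alpha> ` {..<2*g})"
  have gc: "free_gen k \<in> carrier F" if "k \<le> 2*g" for k
    using that unfolding F_def by (auto intro!: free_gen_carrier)
  have ac: "\<alpha> i \<in> carrier F" if "i < 2*g" for i
    using that gc unfolding \<alpha>_def by (auto intro!: F.m_closed F.nat_pow_closed F.int_pow_closed)
  have acs: "\<alpha> ` {..<2*g} \<subseteq> carrier F" using ac by auto
  have cH: "carrier H = generate F (\<alpha> ` {..<2*g})"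
    unfolding H_def carrier_subgroup_generated using acs by (simp add: Int_absorb1)
  have Hsub: "subgroup (carrier H) F" unfolding cH by (rule F.generate_is_subgroup[OF acs])
  have Heq: "H = F\<lparr>carrier := carrier H\<rparr>" unfolding H_def subgroup_generated_def by simp
  have genH: "generate H (\<alpha> ` {..<2*g}) = carrier H"
    using F.generate_consistent[OF _ Hsub, of "\<alpha> ` {..<2*g}"] Heq cH F.generate_incl[OF acs]
    by (metis generate.incl subsetI)
  have hom: "Ecut (2*g) \<in> hom F (Zg (2*g))" unfolding F_def by (rule Ecut_hom)
  interpret E: group_hom F "Zg (2*g)" "Ecut (2*g)"
    using hom by (simp add: group_hom_def group_hom_axioms_def F.is_group Z.is_group)
  have "Zg (2*g) \<cong> abelianization H"
  proof (rule abel_iso[where c = "int N"])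
    show "group H" unfolding H_def by (rule F.group_subgroup_generated)
    show "\<forall>i<2*g. \<alpha> i \<in> carrier H" using cH ac by (auto intro: generate.incl)
    show "carrier H \<subseteq> generate H (\<alpha> ` {..<2*g})" using genH by simp
    show "Ecut (2*g) \<in> hom H (Zg (2*g))" unfolding H_def by (rule F.hom_from_subgroup_generated[OF hom])
    show "int N \<noteq> 0" using N by simp
    show "\<forall>i<2*g. Ecut (2*g) (\<alpha> i) = (\<lambda>j. if j = i then int N else 0)"
    proof (intro allI impI)
      fix i assume i: "i < 2*g"
      have c1: "free_gen i \<in> carrier F" "free_gen (2*g) \<in> carrier F"
        using i gc by auto
      have "Ecut (2*g) (\<alpha> i) = Ecut (2*g) (free_gen i) [^]\<^bsub>Zg (2*g)\<^esub> N \<otimes>\<^bsub>Zg (2*g)\<^esub>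
              Ecut (2*g) (free_gen (2*g)) [^]\<^bsub>Zg (2*g)\<^esub> (- m i)"
        unfolding \<alpha>_def using c1 by (simp add: E.hom_nat_pow E.hom_int_pow)
      also have "\<dots> = (\<lambda>j. if j = i then int N else 0)"
        using i by (subst Zg_int_pow) (auto simp: Ecut_gen Zg_carrier Zg_nat_pow Zg_mult fun_eq_iff)
      finally show "Ecut (2*g) (\<alpha> i) = (\<lambda>j. if j = i then int N else 0)" .
    qed
  qed
  then show ?thesis unfolding H_def \<alpha>_def by (simp add: atLeast0LessThan)
qed




lemma relator_props:
  fixes g :: nat
  defines "F \<equiv> free_group {0..<2*g}"
  assumes ks: "\<forall>k\<in>set ks. k < g"
  shows "foldr (\<lambda>k w. let F = free_group {0..<2*g}; a = free_gen (2*k); b = free_gen (2*k+1) in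
              a \<otimes>\<^bsub>F\<^esub> b \<otimes>\<^bsub>F\<^esub> inv\<^bsub>F\<^esub> a \<otimes>\<^bsub>F\<^esub> inv\<^bsub>F\<^esub> b \<otimes>\<^bsub>F\<^esub> w) ks []
         \<in> carrier F \<and>
         Ecut (2*g) (foldr (\<lambda>k w. let F = free_group {0..<2*g}; a = free_gen (2*k); b = free_gen (2*k+1) in
              a \<otimes>\<^bsub>F\<^esub> b \<otimes>\<^bsub>F\<^esub> inv\<^bsub>F\<^esub> a \<otimes>\<^bsub>F\<^esub> inv\<^bsub>F\<^esub> b \<otimes>\<^bsub>F\<^esub> w) ks []) = (\<lambda>_. 0)"
  using ks
proof (induction ks)
  case Nil
  then show ?case by (simp add: F_def fg_carrier Ecut_def esum_def fun_eq_iff)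
next
  case (Cons k ks)
  interpret F: group F unfolding F_def by (rule group_free_group)
  interpret Z: comm_group "Zg (2*g)" by (rule comm_group_Zg)
  have hom: "Ecut (2*g) \<in> hom F (Zg (2*g))" unfolding F_def by (rule Ecut_hom)
  interpret E: group_hom F "Zg (2*g)" "Ecut (2*g)"
    using hom by (simp add: group_hom_def group_hom_axioms_def F.is_group Z.is_group)
  define w where "w = foldr (\<lambda>k w. let F = free_group {0..<2*g}; a = free_gen (2*k); b = free_gen (2*k+1) in
              a \<otimes>\<^bsub>F\<^esub> b \<otimes>\<^bsub>F\<^esub> inv\<^bsub>F\<^esub> a \<otimes>\<^bsub>F\<^esub> inv\<^bsub>F\<^esub> b \<otimes>\<^bsub>F\<^esub> w) ks []"
  have w: "w \<in> carrier F" "Ecut (2*g) w = (\<lambda>_. 0)" using Cons unfolding w_def by auto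
  have k: "k < g" using Cons by simp
  define a where "a = free_gen (2*k)"
  define b where "b = free_gen (2*k+1)"
  have ab: "a \<in> carrier F" "b \<in> carrier F" unfolding a_def b_def F_def using k
    by (auto intro!: free_gen_carrier)
  have eq: "foldr (\<lambda>k w. let F = free_group {0..<2*g}; a = free_gen (2*k); b = free_gen (2*k+1) in
              a \<otimes>\<^bsub>F\<^esub> b \<otimes>\<^bsub>F\<^esub> inv\<^bsub>F\<^esub> a \<otimes>\<^bsub>F\<^esub> inv\<^bsub>F\<^esub> b \<otimes>\<^bsub>F\<^esub> w) (k # ks) []
     = a \<otimes>\<^bsub>F\<^esub> b \<otimes>\<^bsub>F\<^esub> inv\<^bsub>F\<^esub> a \<otimes>\<^bsub>F\<^esub> inv\<^bsub>F\<^esub> b \<otimes>\<^bsub>F\<^esub> w"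
    unfolding w_def a_def b_def F_def by (simp add: Let_def)
  have Ea: "Ecut (2*g) a \<in> carrier (Zg (2*g))" "Ecut (2*g) b \<in> carrier (Zg (2*g))" using ab by auto
  have "Ecut (2*g) (a \<otimes>\<^bsub>F\<^esub> b \<otimes>\<^bsub>F\<^esub> inv\<^bsub>F\<^esub> a \<otimes>\<^bsub>F\<^esub> inv\<^bsub>F\<^esub> b \<otimes>\<^bsub>F\<^esub> w)
        = (\<lambda>i. Ecut (2*g) a i + Ecut (2*g) b i + - Ecut (2*g) a i + - Ecut (2*g) b i + Ecut (2*g) w i)"
    using ab w Ea by (simp add: Zg_mult Zg_inv)
  also have "\<dots> = (\<lambda>_. 0)" using w by (simp add: fun_eq_iff)
  finally show ?case unfolding eq using ab w by simp
qed

lemma surface_part: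
  fixes g :: nat
  shows "\<exists>\<theta>. \<theta> \<in> iso (Zg (2*g)) (abelianization (surface_group g))"
    and "comm_group (abelianization (surface_group g))"
proof -
  define F where "F = free_group {0..<2*g}"
  define r where "r = surface_relator g"
  define R where "R = normal_closure F {r}"
  interpret F: group F unfolding F_def by (rule group_free_group)
  interpret Z: comm_group "Zg (2*g)" by (rule comm_group_Zg)
  have hom: "Ecut (2*g) \<in> hom F (Zg (2*g))" unfolding F_def by (rule Ecut_hom)
  interpret E: group_hom F "Zg (2*g)" "Ecut (2*g)"
    using hom by (simp add: group_hom_def group_hom_axioms_def F.is_group Z.is_group)
  have rp: "r \<in> carrier F" "Ecut (2*g) r = (\<lambda>_. 0)"
    using relator_props[of "[0..<g]" g] unfolding r_def surface_relator_def F_def by auto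
  define C where "C = {h \<otimes>\<^bsub>F\<^esub> s \<otimes>\<^bsub>F\<^esub> inv\<^bsub>F\<^esub> h | h s. h \<in> carrier F \<and> s \<in> {r}}"
  have RC: "R = generate F C" unfolding R_def normal_closure_def C_def by simp
  have Csub: "C \<subseteq> carrier F" unfolding C_def using rp by auto
  have RN: "R \<lhd> F" unfolding RC
  proof (rule F.normal_generateI[OF Csub])
    fix h k assume "h \<in> C" "k \<in> carrier F"
    then obtain u where u: "u \<in> carrier F" "h = u \<otimes>\<^bsub>F\<^esub> r \<otimes>\<^bsub>F\<^esub> inv\<^bsub>F\<^esub> u" unfolding C_def by auto
    have "k \<otimes>\<^bsub>F\<^esub> h \<otimes>\<^bsub>F\<^esub> inv\<^bsub>F\<^esub> k = (k \<otimes>\<^bsub>F\<^esub> u) \<otimes>\<^bsub>F\<^esub> r \<otimes>\<^bsub>F\<^esub> inv\<^bsub>F\<^esub> (k \<otimes>\<^bsub>F\<^esub> u)"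
      using u \<open>k \<in> carrier F\<close> rp by (simp add: F.m_assoc F.inv_mult_group)
    then show "k \<otimes>\<^bsub>F\<^esub> h \<otimes>\<^bsub>F\<^esub> inv\<^bsub>F\<^esub> k \<in> C"
      unfolding C_def using u \<open>k \<in> carrier F\<close> by blast
  qed
  interpret RN: normal R F by (rule RN)
  have Cker: "C \<subseteq> kernel F (Zg (2*g)) (Ecut (2*g))"
  proof
    fix h assume "h \<in> C"
    then obtain u where u: "u \<in> carrier F" "h = u \<otimes>\<^bsub>F\<^esub> r \<otimes>\<^bsub>F\<^esub> inv\<^bsub>F\<^esub> u" unfolding C_def by auto
    have Eu: "Ecut (2*g) u \<in> carrier (Zg (2*g))" using u by simp
    have "Ecut (2*g) h = (\<lambda>i. Ecut (2*g) u i + 0 + - Ecut (2*g) u i)"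
      using u rp Eu by (simp add: Zg_mult Zg_inv)
    then have "Ecut (2*g) h = \<one>\<^bsub>Zg (2*g)\<^esub>" by (simp add: Zg_one)
    then show "h \<in> kernel F (Zg (2*g)) (Ecut (2*g))" using u rp by (simp add: kernel_def)
  qed
  have Rker: "R \<subseteq> kernel F (Zg (2*g)) (Ecut (2*g))"
    unfolding RC by (rule F.generate_subgroup_incl[OF Cker E.subgroup_kernel])
  define S where "S = F Mod R"
  have Sg: "surface_group g = S" unfolding S_def F_def R_def r_def surface_group_def by simp
  interpret S: group S unfolding S_def by (rule RN.factorgroup_is_group)
  obtain \<psi> where psi: "\<psi> \<in> hom S (Zg (2*g))" and psir: "\<And>h. h \<in> carrier F \<Longrightarrow> \<psi> (R #>\<^bsub>F\<^esub> h) = Ecut (2*g) h"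
    using E.FactGroup_universal_kernel[OF RN Rker] unfolding S_def by metis
  define \<pi> where "\<pi> = (\<lambda>h. R #>\<^bsub>F\<^esub> h)"
  have pi: "\<pi> \<in> hom F S" unfolding \<pi>_def S_def by (rule RN.r_coset_hom_Mod)
  interpret PI: group_hom F S \<pi> using pi by (simp add: group_hom_def group_hom_axioms_def F.is_group S.is_group)
  define x where "x = (\<lambda>i. \<pi> (free_gen i))"
  have gc: "free_gen i \<in> carrier F" if "i < 2*g" for i using that unfolding F_def by (auto intro!: free_gen_carrier)
  have gens: "free_gen ` {..<2*g} \<subseteq> carrier F" using gc by auto
  have "Zg (2*g) \<cong> abelianization S"
  proof (rule abel_iso[where c = 1 and x = x and \<phi> = \<psi>])
    show "group S" by (rule S.is_group)
    show "\<forall>i<2*g. x i \<in> carrier S" unfolding x_def using gc by simp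
    have "carrier S = \<pi> ` carrier F" unfolding S_def \<pi>_def by (simp add: carrier_FactGroup)
    also have "\<dots> \<subseteq> \<pi> ` generate F (free_gen ` {..<2*g})"
      using fg_generated[of "{0..<2*g}"] unfolding F_def by (auto simp: atLeast0LessThan)
    also have "\<dots> = generate S (\<pi> ` free_gen ` {..<2*g})" by (rule PI.generate_img[symmetric, OF gens])
    also have "\<dots> = generate S (x ` {..<2*g})" unfolding x_def by (simp add: image_image)
    finally show "carrier S \<subseteq> generate S (x ` {..<2*g})" .
    show "\<psi> \<in> hom S (Zg (2*g))" by (rule psi)
    show "\<forall>i<2*g. \<psi> (x i) = (\<lambda>j. if j = i then 1 else 0)"
      unfolding x_def \<pi>_def using gc psir by (auto simp: Ecut_gen fun_eq_iff)
  qed simp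
  then show "\<exists>\<theta>. \<theta> \<in> iso (Zg (2*g)) (abelianization (surface_group g))" unfolding Sg is_iso_def by blast
  show "comm_group (abelianization (surface_group g))"
    unfolding Sg abelianization_def by (rule S.derived_quot_is_comm_group)
qed


theorem mainTheorem4:
  fixes g N :: nat and f :: "(nat \<times> bool) list \<Rightarrow> int"
  defines "F \<equiv> punctured_group g"
    and "\<beta> \<equiv> free_gen (2*g)"
  assumes "g \<ge> 1" and "N \<ge> 1"
    and "f \<in> hom F integer_group"
    and "f \<beta> = int N"
  shows "let \<alpha> = (\<lambda>i. (free_gen i [^]\<^bsub>F\<^esub> N) \<otimes>\<^bsub>F\<^esub> (\<beta> [^]\<^bsub>F\<^esub> (- f (free_gen i))));
             G = subgroup_generated F (\<alpha> ` {0..<2*g});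
             A = abelianization (surface_group g);
             NA = (\<lambda>x. x [^]\<^bsub>A\<^esub> N) ` carrier A
         in card (rcosets\<^bsub>A\<^esub> NA) = N ^ (2*g)
            \<and> abelianization G \<cong> subgroup_generated A NA"
proof -
  obtain \<theta> where th: "\<theta> \<in> iso (Zg (2*g)) (abelianization (surface_group g))"
    using surface_part(1) by blast
  have P: "card (rcosets\<^bsub>abelianization (surface_group g)\<^esub>
              ((\<lambda>x. x [^]\<^bsub>abelianization (surface_group g)\<^esub> N) ` carrier (abelianization (surface_group g)))) = N ^ (2*g)
         \<and> Zg (2*g) \<cong> subgroup_generated (abelianization (surface_group g))
              ((\<lambda>x. x [^]\<^bsub>abelianization (surface_group g)\<^esub> N) ` carrier (abelianization (surface_group g)))"
    by (rule power_subgroup[OF surface_part(2) th \<open>N \<ge> 1\<close>])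
  have G: "Zg (2*g) \<cong> abelianization (subgroup_generated F
           ((\<lambda>i. (free_gen i [^]\<^bsub>F\<^esub> N) \<otimes>\<^bsub>F\<^esub> (\<beta> [^]\<^bsub>F\<^esub> (- f (free_gen i)))) ` {0..<2*g}))"
    unfolding F_def \<beta>_def punctured_group_def
    using G_part[OF \<open>N \<ge> 1\<close>, of g "\<lambda>i. f (free_gen i)"] by simp
  have G': "abelianization (subgroup_generated F
           ((\<lambda>i. (free_gen i [^]\<^bsub>F\<^esub> N) \<otimes>\<^bsub>F\<^esub> (\<beta> [^]\<^bsub>F\<^esub> (- f (free_gen i)))) ` {0..<2*g})) \<cong> Zg (2*g)"
    by (rule group.iso_sym[OF group_Zg G])
  show ?thesis unfolding Let_def using P iso_trans[OF G'] by blast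
qed

end
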